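(* Let $a,b\in\mathbb{R}^n$. (a) Let $r>0$ and $p\in(1,2]$. Then for all $a,b\in\mathbb{B}(0;r)$, $$\langle \|a\|^{p-2}a-\|b\|^{p-2}b,\ a-b\rangle\ \ge\ \kappa_p\, r^{p-2}\,\|a-b\|^2 .$$ (b) Let $r>0$, $p\ge 2$ and $s=\frac{p}{p-1}$. Then for all $a,b\in\mathbb{B}(0;r)$, $$\big\|\,\|a\|^{p-2}a-\|b\|^{p-2}b\,\big\|\ \le\ \frac{2r^{p-2}}{\kappa_s}\,\|a-b\| .$$
   Context: $\|\cdot\|$ is the Euclidean norm on $\mathbb{R}^n$ and $\mathbb{B}(0;r)$ the open ball of radius $r$ about the origin. The convention $\|0\|^{p-2}\,0=0$ is used (also for $p<2$). The function $\kappa:(1,2]\to(0,\infty)$, $t\mapsto\kappa_t$, is defined by $\kappa_t=\frac{(2+\sqrt3)(t-1)}{16}$ for $t\in(1,\hat t]$, $\kappa_t=\frac{2+\sqrt3}{16}\big(1-(3-\sqrt3)^{1-t}\big)$ for $t\in[\hat t,2)$, and $\kappa_2=1$, where $\hat t\approx 1.3214$ is the solution in $(1,2]$ of $\frac{t(t-1)}{2}=1-\Big[1+\frac{(2-\sqrt3)t}{t-1}\Big]^{1-t}$. *)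

theory Defs
  imports "HOL-Analysis.Analysis"
begin

definition t_hat :: real where
  "t_hat = (THE t. 1 < t \<and> t \<le> 2 \<and>
     t * (t - 1) / 2 = 1 - (1 + (2 - sqrt 3) * t / (t - 1)) powr (1 - t))"

definition kappa :: "real \<Rightarrow> real" where
  "kappa t = (if t = 2 then 1
     else if t \<le> t_hat then (2 + sqrt 3) * (t - 1) / 16
     else (2 + sqrt 3) / 16 * (1 - (3 - sqrt 3) powr (1 - t)))"

end

theory Submission
  imports Defs
begin


lemma mono_aux:
  fixes q K v u :: real
  assumes "0 < v" "v \<le> u" "\<And>x. v \<le> x \<Longrightarrow> x \<le> u \<Longrightarrow> K \<le> q * x powr (q - 1)"
  shows "K * (u - v) \<le> u powr q - v powr q"
proof -
  have "(\<lambda>x. x powr q - K * x) v \<le> (\<lambda>x. x powr q - K * x) u"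
  proof (rule DERIV_nonneg_imp_nondecreasing[OF assms(2)])
    fix x assume x: "v \<le> x" "x \<le> u"
    then have "x > 0" using assms by simp
    have "DERIV (\<lambda>x. x powr q - K * x) x :> q * x powr (q - 1) - K"
      using \<open>x > 0\<close> by (auto intro!: derivative_eq_intros simp: powr_diff)
    then show "\<exists>y. DERIV (\<lambda>x. x powr q - K * x) x :> y \<and> y \<ge> 0"
      using assms(3)[OF x] by auto
  qed
  then show ?thesis by (simp add: algebra_simps)
qed

lemma mono_aux2:
  fixes q K v u :: real
  assumes "0 < v" "v \<le> u" "\<And>x. v \<le> x \<Longrightarrow> x \<le> u \<Longrightarrow> q * x powr (q - 1) \<le> K"
  shows "u powr q - v powr q \<le> K * (u - v)"
proof -
  have "(\<lambda>x. x powr q - K * x) u \<le> (\<lambda>x. x powr q - K * x) v"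
  proof (rule DERIV_nonpos_imp_nonincreasing[OF assms(2)])
    fix x assume x: "v \<le> x" "x \<le> u"
    then have "x > 0" using assms by simp
    have "DERIV (\<lambda>x. x powr q - K * x) x :> q * x powr (q - 1) - K"
      using \<open>x > 0\<close> by (auto intro!: derivative_eq_intros simp: powr_diff)
    then show "\<exists>y. DERIV (\<lambda>x. x powr q - K * x) x :> y \<and> y \<le> 0"
      using assms(3)[OF x] by auto
  qed
  then show ?thesis by (simp add: algebra_simps)
qed


lemma powr_times_self: "0 \<le> (u::real) \<Longrightarrow> u powr (p - 2) * u = u powr (p - 1)"
proof (cases "u = 0")
  case False
  assume "0 \<le> u" then have "u > 0" using False by simp
  have "u powr (p - 1) = u powr ((p - 2) + 1)" by simp
  also have "\<dots> = u powr (p - 2) * u" using \<open>u>0\<close> by (simp only: powr_add powr_one)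
  finally show ?thesis by simp
qed simp

lemma lin_aux:
  fixes c m al be :: real
  assumes "\<bar>c\<bar> \<le> m" "0 \<le> al + be * m" "0 \<le> al - be * m"
  shows "0 \<le> al + be * c"
proof (cases "be \<ge> 0")
  case True
  then have "be * (-m) \<le> be * c" using assms(1) by (intro mult_left_mono) auto
  then show ?thesis using assms by simp
next
  case False
  then have "be * m \<le> be * c" using assms(1) by (intro mult_left_mono_neg) auto
  then show ?thesis using assms by simp
qed

lemma scalarA_dir:
  fixes p r u v K :: real
  assumes p: "1 < p" "p \<le> 2" and uv: "0 \<le> v" "v \<le> u" "u < r"
    and K: "K \<le> (p - 1) * r powr (p - 2)" "K \<le> r powr (p - 2)"
  shows "K * (u - v) \<le> u powr (p - 1) - v powr (p - 1)"
proof (cases "v = 0")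
  case True
  have "K * u \<le> r powr (p - 2) * u" using K uv by (intro mult_right_mono) auto
  also have "\<dots> \<le> u powr (p - 2) * u"
  proof (cases "u = 0")
    case False
    then show ?thesis using uv p by (intro mult_right_mono powr_mono2') auto
  qed simp
  also have "\<dots> = u powr (p - 1)" using uv by (simp add: powr_times_self)
  finally show ?thesis using True p by simp
next
  case False
  then have "0 < v" using uv by simp
  show ?thesis
  proof (rule mono_aux[OF \<open>0 < v\<close> uv(2)])
    fix x assume x: "v \<le> x" "x \<le> u"
    have "r powr (p - 2) \<le> x powr (p - 2)"
      using x uv p \<open>0 < v\<close> by (intro powr_mono2') auto
    then have "(p - 1) * r powr (p - 2) \<le> (p - 1) * x powr (p - 2)"
      using p by (intro mult_left_mono) auto
    then show "K \<le> (p - 1) * x powr (p - 1 - 1)" using K by simp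
  qed
qed

lemma scalarA:
  fixes p r u v K :: real
  assumes p: "1 < p" "p \<le> 2" and uv: "0 \<le> u" "0 \<le> v" "u < r" "v < r"
    and K: "K \<le> (p - 1) * r powr (p - 2)" "K \<le> r powr (p - 2)"
  shows "K * (u - v)^2 \<le> (u powr (p - 1) - v powr (p - 1)) * (u - v)"
    and "K * (u + v) \<le> u powr (p - 1) + v powr (p - 1)"
proof -
  show "K * (u - v)^2 \<le> (u powr (p - 1) - v powr (p - 1)) * (u - v)"
  proof (cases "v \<le> u")
    case True
    have "K * (u - v) * (u - v) \<le> (u powr (p - 1) - v powr (p - 1)) * (u - v)"
      using scalarA_dir[OF p uv(2) True uv(3) K] True by (intro mult_right_mono) auto
    then show ?thesis by (simp add: power2_eq_square)
  next
    case False
    have "K * (v - u) * (v - u) \<le> (v powr (p - 1) - u powr (p - 1)) * (v - u)"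
      using scalarA_dir[OF p uv(1) _ uv(4) K] False by (intro mult_right_mono) auto
    then show ?thesis by (simp add: power2_eq_square algebra_simps)
  qed
  have "K * u \<le> u powr (p - 1)" using scalarA_dir[OF p order.refl uv(1) uv(3) K] by simp
  moreover have "K * v \<le> v powr (p - 1)" using scalarA_dir[OF p order.refl uv(2) uv(4) K] by simp
  ultimately show "K * (u + v) \<le> u powr (p - 1) + v powr (p - 1)" by (simp add: algebra_simps)
qed

lemma scalarB_dir:
  fixes p r u v L :: real
  assumes p: "2 \<le> p" and uv: "0 \<le> v" "v \<le> u" "u < r"
    and L: "(p - 1) * r powr (p - 2) \<le> L" "r powr (p - 2) \<le> L"
  shows "u powr (p - 1) - v powr (p - 1) \<le> L * (u - v)"
proof (cases "v = 0")
  case True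
  have "u powr (p - 1) = u powr (p - 2) * u" using uv by (simp add: powr_times_self)
  also have "\<dots> \<le> r powr (p - 2) * u"
    using uv p by (intro mult_right_mono powr_mono2) auto
  also have "\<dots> \<le> L * u" using L uv by (intro mult_right_mono) auto
  finally show ?thesis using True p by simp
next
  case False
  then have "0 < v" using uv by simp
  show ?thesis
  proof (rule mono_aux2[OF \<open>0 < v\<close> uv(2)])
    fix x assume x: "v \<le> x" "x \<le> u"
    have "x powr (p - 2) \<le> r powr (p - 2)"
      using x uv p \<open>0 < v\<close> by (intro powr_mono2) auto
    then have "(p - 1) * x powr (p - 2) \<le> (p - 1) * r powr (p - 2)"
      using p by (intro mult_left_mono) auto
    then show "(p - 1) * x powr (p - 1 - 1) \<le> L" using L by simp
  qed
qed

lemma scalarB: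
  fixes p r u v L :: real
  assumes p: "2 \<le> p" and uv: "0 \<le> u" "0 \<le> v" "u < r" "v < r"
    and L: "(p - 1) * r powr (p - 2) \<le> L" "r powr (p - 2) \<le> L"
  shows "(u powr (p - 1) - v powr (p - 1))^2 \<le> L^2 * (u - v)^2"
    and "(u powr (p - 1) + v powr (p - 1))^2 \<le> L^2 * (u + v)^2"
proof -
  have mono: "x powr (p - 1) \<le> y powr (p - 1)" if "0 \<le> x" "x \<le> y" for x y :: real
    using that p by (intro powr_mono2) auto
  have "\<bar>u powr (p - 1) - v powr (p - 1)\<bar> \<le> L * \<bar>u - v\<bar>"
  proof (cases "v \<le> u")
    case True
    then show ?thesis using scalarB_dir[OF p uv(2) True uv(3) L] mono[OF uv(2) True] by simp
  next
    case False
    then show ?thesis using scalarB_dir[OF p uv(1) _ uv(4) L] mono[OF uv(1)] by simp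
  qed
  then have "\<bar>u powr (p - 1) - v powr (p - 1)\<bar>^2 \<le> (L * \<bar>u - v\<bar>)^2"
    by (intro power_mono) auto
  then show "(u powr (p - 1) - v powr (p - 1))^2 \<le> L^2 * (u - v)^2"
    by (simp add: power_mult_distrib)
  have "u powr (p - 1) \<le> L * u" using scalarB_dir[OF p order.refl uv(1) uv(3) L] by simp
  moreover have "v powr (p - 1) \<le> L * v" using scalarB_dir[OF p order.refl uv(2) uv(4) L] by simp
  ultimately have "u powr (p - 1) + v powr (p - 1) \<le> L * (u + v)" by (simp add: algebra_simps)
  then have "(u powr (p - 1) + v powr (p - 1))^2 \<le> (L * (u + v))^2"
    by (intro power_mono) auto
  then show "(u powr (p - 1) + v powr (p - 1))^2 \<le> L^2 * (u + v)^2"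
    by (simp add: power_mult_distrib)
qed

lemma kappa_bounds:
  assumes "1 < t" "t \<le> 2"
  shows "0 < kappa t" "kappa t \<le> t - 1"
proof -
  have "sqrt 1 < sqrt 3" "sqrt 3 < sqrt 4" by (simp_all only: real_sqrt_less_iff)
  then have s3: "1 < sqrt 3" "sqrt 3 < 2" by simp_all
  define c where "c = 3 - sqrt 3"
  have c: "1 < c" "c < 2" using s3 by (auto simp: c_def)
  have e1: "c powr (1 - t) < 1" using c assms by (intro powr_less_one) auto
  have "c powr (1 - t) = exp ((1 - t) * ln c)" using c by (simp add: powr_def)
  also have "\<dots> \<ge> 1 + (1 - t) * ln c" by simp
  finally have e2: "1 - c powr (1 - t) \<le> (t - 1) * ln c" by (simp add: algebra_simps)
  have "ln c \<le> c - 1" using c by (intro ln_le_minus_one) auto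
  then have "(t - 1) * ln c \<le> (t - 1) * 1" using c assms by (intro mult_left_mono) auto
  with e2 have e3: "1 - c powr (1 - t) \<le> t - 1" by simp
  have k: "(2 + sqrt 3) / 16 < 1" using s3 by simp
  have s0: "0 < 2 + sqrt 3" using s3 by linarith
  have b1: "0 < (2 + sqrt 3) * (t - 1) / 16"
    by (intro divide_pos_pos mult_pos_pos s0) (use assms in auto)
  have b2: "0 < (2 + sqrt 3) / 16 * (1 - (3 - sqrt 3) powr (1 - t))"
    by (intro mult_pos_pos divide_pos_pos s0) (use e1 c_def in auto)
  show "0 < kappa t" unfolding kappa_def using b1 b2 by simp
  have "(2 + sqrt 3) / 16 * (1 - c powr (1 - t)) \<le> 1 * (t - 1)"
    using e1 e3 k by (intro mult_mono) auto
  moreover have "(2 + sqrt 3) * (t - 1) / 16 \<le> t - 1"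
    using mult_right_mono[OF less_imp_le[OF k], of "t - 1"] assms by simp
  ultimately show "kappa t \<le> t - 1" unfolding kappa_def c_def by auto
qed


lemma expand_inner:
  fixes a b :: "'a::real_inner" and U V :: real
  shows "(U *\<^sub>R a - V *\<^sub>R b) \<bullet> (a - b) = U * (norm a)^2 + V * (norm b)^2 - (U + V) * (a \<bullet> b)"
    and "(norm (a - b))^2 = (norm a)^2 + (norm b)^2 - 2 * (a \<bullet> b)"
    and "(norm (U *\<^sub>R a - V *\<^sub>R b))^2 = U^2 * (norm a)^2 + V^2 * (norm b)^2 - 2 * (U * V) * (a \<bullet> b)"
  unfolding power2_norm_eq_inner
  by (simp_all add: inner_diff_left inner_diff_right inner_commute algebra_simps power2_eq_square)

lemma partA:
  fixes a b :: "'a::real_inner" and p r K :: real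
  assumes p: "1 < p" "p \<le> 2" and ab: "norm a < r" "norm b < r"
    and K: "K \<le> (p - 1) * r powr (p - 2)" "K \<le> r powr (p - 2)"
  shows "K * (norm (a - b))^2 \<le> ((norm a powr (p - 2)) *\<^sub>R a - (norm b powr (p - 2)) *\<^sub>R b) \<bullet> (a - b)"
proof -
  define u v c U V where "u = norm a" "v = norm b" "c = a \<bullet> b" "U = u powr (p - 2)" "V = v powr (p - 2)"
  have uv: "0 \<le> u" "0 \<le> v" "u < r" "v < r" using ab by (auto simp: u_v_c_U_V_def)
  have Uu: "U * u = u powr (p - 1)" "V * v = v powr (p - 1)"
    using uv by (simp_all add: u_v_c_U_V_def powr_times_self)
  have cs: "\<bar>c\<bar> \<le> u * v" unfolding u_v_c_U_V_def by (rule Cauchy_Schwarz_ineq2)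
  have A1: "K * (u - v)^2 \<le> (U * u - V * v) * (u - v)" using scalarA(1)[OF p uv K] Uu by simp
  have A2: "K * (u + v) \<le> U * u + V * v" using scalarA(2)[OF p uv K] Uu by simp
  have A2': "K * (u + v) * (u + v) \<le> (U * u + V * v) * (u + v)"
    using A2 uv by (intro mult_right_mono) auto
  have "0 \<le> (U * u^2 + V * v^2 - K * (u^2 + v^2)) + (2 * K - (U + V)) * c"
  proof (rule lin_aux[OF cs])
    show "0 \<le> U * u\<^sup>2 + V * v\<^sup>2 - K * (u\<^sup>2 + v\<^sup>2) + (2 * K - (U + V)) * (u * v)"
      using A1 by (simp add: power2_eq_square algebra_simps)
    show "0 \<le> U * u\<^sup>2 + V * v\<^sup>2 - K * (u\<^sup>2 + v\<^sup>2) - (2 * K - (U + V)) * (u * v)"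
      using A2' by (simp add: power2_eq_square algebra_simps)
  qed
  moreover have eqs: "((norm a powr (p - 2)) *\<^sub>R a - (norm b powr (p - 2)) *\<^sub>R b) \<bullet> (a - b) = U * u^2 + V * v^2 - (U + V) * c"
    "(norm (a - b))^2 = u^2 + v^2 - 2 * c"
    unfolding expand_inner by (simp_all add: u_v_c_U_V_def)
  ultimately show ?thesis unfolding eqs by (simp add: algebra_simps)
qed

lemma partB:
  fixes a b :: "'a::real_inner" and p r L :: real
  assumes p: "2 \<le> p" and ab: "norm a < r" "norm b < r"
    and L: "(p - 1) * r powr (p - 2) \<le> L" "r powr (p - 2) \<le> L"
  shows "norm ((norm a powr (p - 2)) *\<^sub>R a - (norm b powr (p - 2)) *\<^sub>R b) \<le> L * norm (a - b)"
proof -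
  define u v c U V where "u = norm a" "v = norm b" "c = a \<bullet> b" "U = u powr (p - 2)" "V = v powr (p - 2)"
  have uv: "0 \<le> u" "0 \<le> v" "u < r" "v < r" using ab by (auto simp: u_v_c_U_V_def)
  have Uu: "U * u = u powr (p - 1)" "V * v = v powr (p - 1)"
    using uv by (simp_all add: u_v_c_U_V_def powr_times_self)
  have cs: "\<bar>c\<bar> \<le> u * v" unfolding u_v_c_U_V_def by (rule Cauchy_Schwarz_ineq2)
  have B1: "(U * u - V * v)^2 \<le> L^2 * (u - v)^2" using scalarB(1)[OF p uv L] Uu by simp
  have B2: "(U * u + V * v)^2 \<le> L^2 * (u + v)^2" using scalarB(2)[OF p uv L] Uu by simp
  have "0 \<le> (L^2 * (u^2 + v^2) - U^2 * u^2 - V^2 * v^2) + (2 * (U * V) - 2 * L^2) * c"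
  proof (rule lin_aux[OF cs])
    show "0 \<le> L^2 * (u^2 + v^2) - U^2 * u^2 - V^2 * v^2 + (2 * (U * V) - 2 * L^2) * (u * v)"
      using B1 by (simp add: power2_eq_square algebra_simps)
    show "0 \<le> L^2 * (u^2 + v^2) - U^2 * u^2 - V^2 * v^2 - (2 * (U * V) - 2 * L^2) * (u * v)"
      using B2 by (simp add: power2_eq_square algebra_simps)
  qed
  then have sq: "(norm (U *\<^sub>R a - V *\<^sub>R b))^2 \<le> (L * norm (a - b))^2"
  proof -
    have eqs: "(norm (U *\<^sub>R a - V *\<^sub>R b))^2 = U^2 * u^2 + V^2 * v^2 - 2 * (U * V) * c"
      "(norm (a - b))^2 = u^2 + v^2 - 2 * c"
      unfolding expand_inner by (simp_all add: u_v_c_U_V_def power_mult_distrib)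
    show ?thesis unfolding power_mult_distrib eqs using \<open>0 \<le> (L^2 * (u^2 + v^2) - U^2 * u^2 - V^2 * v^2) + (2 * (U * V) - 2 * L^2) * c\<close>
      by (simp add: power_mult_distrib algebra_simps)
  qed
  have "0 \<le> L" using order.trans[OF powr_ge_zero L(2)] .
  then have nL: "0 \<le> L * norm (a - b)" by (intro mult_nonneg_nonneg norm_ge_zero)
  have "norm (U *\<^sub>R a - V *\<^sub>R b) \<le> L * norm (a - b)"
    by (rule power2_le_imp_le[OF sq nL])
  then show ?thesis by (simp only: u_v_c_U_V_def)
qed


theorem lemma2:
  fixes r p :: real
  shows "(r > 0 \<and> 1 < p \<and> p \<le> 2 \<longrightarrow>
            (\<forall>a \<in> ball (0::real^'n) r. \<forall>b \<in> ball 0 r.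
               ((norm a powr (p - 2)) *\<^sub>R a - (norm b powr (p - 2)) *\<^sub>R b) \<bullet> (a - b)
                 \<ge> kappa p * r powr (p - 2) * (norm (a - b))\<^sup>2))
       \<and> (r > 0 \<and> p \<ge> 2 \<longrightarrow>
            (let s = p / (p - 1) in
             \<forall>a \<in> ball (0::real^'n) r. \<forall>b \<in> ball 0 r.
               norm ((norm a powr (p - 2)) *\<^sub>R a - (norm b powr (p - 2)) *\<^sub>R b)
                 \<le> 2 * r powr (p - 2) / kappa s * norm (a - b)))"
proof (intro conjI impI)
  assume h: "r > 0 \<and> 1 < p \<and> p \<le> 2"
  then have p: "1 < p" "p \<le> 2" and r: "r > 0" by auto
  have R: "0 < r powr (p - 2)" using r by simp
  have k: "kappa p \<le> p - 1" using kappa_bounds[OF p] by simp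
  have K1: "kappa p * r powr (p - 2) \<le> (p - 1) * r powr (p - 2)"
    using k R by (intro mult_right_mono) auto
  have K2: "kappa p * r powr (p - 2) \<le> 1 * r powr (p - 2)"
    using k R p by (intro mult_right_mono) auto
  show "\<forall>a \<in> ball (0::real^'n) r. \<forall>b \<in> ball 0 r.
               ((norm a powr (p - 2)) *\<^sub>R a - (norm b powr (p - 2)) *\<^sub>R b) \<bullet> (a - b)
                 \<ge> kappa p * r powr (p - 2) * (norm (a - b))\<^sup>2"
  proof (intro ballI)
    fix a b :: "real^'n" assume "a \<in> ball 0 r" "b \<in> ball 0 r"
    then have "norm a < r" "norm b < r" by auto
    from partA[OF p this K1] K2 show "((norm a powr (p - 2)) *\<^sub>R a - (norm b powr (p - 2)) *\<^sub>R b) \<bullet> (a - b)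
                 \<ge> kappa p * r powr (p - 2) * (norm (a - b))\<^sup>2" by simp
  qed
next
  assume h: "r > 0 \<and> p \<ge> 2"
  then have p: "2 \<le> p" and r: "r > 0" by auto
  define s where "s = p / (p - 1)"
  have s: "1 < s" "s \<le> 2" using p by (auto simp: s_def field_simps)
  have s1: "s - 1 = 1 / (p - 1)" using p by (simp add: s_def field_simps)
  have ks: "0 < kappa s" "kappa s \<le> 1 / (p - 1)" using kappa_bounds[OF s] s1 by auto
  then have "(p - 1) * kappa s \<le> 1" using p by (simp add: field_simps)
  then have q: "p - 1 \<le> 2 / kappa s" using ks p by (simp add: field_simps)
  have R: "0 < r powr (p - 2)" using r by simp
  have L1: "(p - 1) * r powr (p - 2) \<le> 2 * r powr (p - 2) / kappa s"
    using mult_right_mono[OF q, of "r powr (p - 2)"] R by simp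
  have L2: "r powr (p - 2) \<le> 2 * r powr (p - 2) / kappa s"
  proof -
    have "1 * r powr (p - 2) \<le> (p - 1) * r powr (p - 2)"
      using R p by (intro mult_right_mono) auto
    then show ?thesis using L1 by simp
  qed
  show "let s = p / (p - 1) in
             \<forall>a \<in> ball (0::real^'n) r. \<forall>b \<in> ball 0 r.
               norm ((norm a powr (p - 2)) *\<^sub>R a - (norm b powr (p - 2)) *\<^sub>R b)
                 \<le> 2 * r powr (p - 2) / kappa s * norm (a - b)"
    unfolding Let_def s_def[symmetric]
  proof (intro ballI)
    fix a b :: "real^'n" assume "a \<in> ball 0 r" "b \<in> ball 0 r"
    then have "norm a < r" "norm b < r" by auto
    from partB[OF p this L1 L2] show "norm ((norm a powr (p - 2)) *\<^sub>R a - (norm b powr (p - 2)) *\<^sub>R b)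
                 \<le> 2 * r powr (p - 2) / kappa s * norm (a - b)" .
  qed
qed

end
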